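(* Let $H=(V,E)$ be an unweighted hypergraph and consider the algorithm Estimation$(H)$: compute a number $k>0$ with $\gamma_H(e)\ge k$ for all $e\in E$; set $H_0=H$ and $i=1$; while $H_{i-1}$ has edges, let $F_i=\textsc{WeakEdges}(H_{i-1},2^ik)$, set $\gamma'(e)=2^{i-1}k$ for every $e\in F_i$, set $H_i=H_{i-1}-F_i$ and increase $i$ by one. Here $\textsc{WeakEdges}(G,t)$ is any procedure returning a set of edges of $G$ that contains all $t$-weak edges of $G$. Then: (1) for each $i$ and each $e\in F_i$, $\gamma_H(e)\ge 2^{i-1}k$; (2) for each $e\in E$ assigned a value $\gamma'(e)$ by the algorithm, $\gamma'(e)\le\gamma_H(e)$.
   Context: A hypergraph $H=(V,E)$ has edges that are subsets of $V$. For $U\subseteq V$, $H[U]=(U,\{e\in E:e\subseteq U\})$; for $A\subseteq V$, $\delta_H(A)$ is the set of edges meeting both $A$ and $V\setminus A$; $\lambda(H)=\min_{\emptyset\subsetneq A\subsetneq V}|\delta_H(A)|$. The strength of $e$ is $\gamma_H(e)=\max_{e\subseteq U\subseteq V}\lambda(H[U])$. An edge is $t$-weak in $G$ if its strength in $G$ is less than $t$. $H-F$ denotes deletion of the edge set $F$. *)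

theory Defs
  imports "HOL-Library.Extended_Real"
begin

text \<open>A hypergraph is given by a vertex set V, a set E of edge identifiers
  (allowing parallel edges) and a map ends assigning to each edge its vertex set.\<close>

definition induced_edges :: "'e set \<Rightarrow> ('e \<Rightarrow> 'a set) \<Rightarrow> 'a set \<Rightarrow> 'e set" where
  "induced_edges E ends U = {f \<in> E. ends f \<subseteq> U}"

definition cut_edges :: "'a set \<Rightarrow> 'e set \<Rightarrow> ('e \<Rightarrow> 'a set) \<Rightarrow> 'a set \<Rightarrow> 'e set" where
  "cut_edges V E ends A = {f \<in> E. ends f \<inter> A \<noteq> {} \<and> ends f \<inter> (V - A) \<noteq> {}}"

text \<open>Edge connectivity lambda(H); the minimum over an empty family is infinity.\<close>
definition edge_conn :: "'a set \<Rightarrow> 'e set \<Rightarrow> ('e \<Rightarrow> 'a set) \<Rightarrow> ereal" where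
  "edge_conn V E ends =
     Inf {ereal (real (card (cut_edges V E ends A))) | A. A \<noteq> {} \<and> A \<subset> V}"

definition strength :: "'a set \<Rightarrow> 'e set \<Rightarrow> ('e \<Rightarrow> 'a set) \<Rightarrow> 'e \<Rightarrow> ereal" where
  "strength V E ends e =
     Sup {edge_conn U (induced_edges E ends U) ends | U. ends e \<subseteq> U \<and> U \<subseteq> V}"

definition weak :: "'a set \<Rightarrow> 'e set \<Rightarrow> ('e \<Rightarrow> 'a set) \<Rightarrow> real \<Rightarrow> 'e \<Rightarrow> bool" where
  "weak V E ends t e \<longleftrightarrow> strength V E ends e < ereal t"

text \<open>Edges remaining after i rounds of the algorithm: E(H_i) = E - (F_1 \<union> ... \<union> F_i).\<close>
definition remaining :: "'e set \<Rightarrow> (nat \<Rightarrow> 'e set) \<Rightarrow> nat \<Rightarrow> 'e set" where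
  "remaining E F i = E - (\<Union>j\<in>{1..i}. F j)"

text \<open>F is a valid run of Estimation(H) with parameter k: whenever round i is executed
  (H_{i-1} still has edges), F_i is a set of edges of H_{i-1} containing all
  (2^i k)-weak edges of H_{i-1}.\<close>
definition estimation_run ::
  "'a set \<Rightarrow> 'e set \<Rightarrow> ('e \<Rightarrow> 'a set) \<Rightarrow> real \<Rightarrow> (nat \<Rightarrow> 'e set) \<Rightarrow> bool" where
  "estimation_run V E ends k F \<longleftrightarrow>
     (\<forall>i\<ge>1. remaining E F (i - 1) \<noteq> {} \<longrightarrow>
        F i \<subseteq> remaining E F (i - 1) \<and>
        {e \<in> remaining E F (i - 1). weak V (remaining E F (i - 1)) ends (2 ^ i * k) e} \<subseteq> F i)"

definition executed :: "'e set \<Rightarrow> (nat \<Rightarrow> 'e set) \<Rightarrow> nat \<Rightarrow> bool" where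
  "executed E F i \<longleftrightarrow> i \<ge> 1 \<and> remaining E F (i - 1) \<noteq> {}"

definition est_value :: "'e set \<Rightarrow> (nat \<Rightarrow> 'e set) \<Rightarrow> real \<Rightarrow> 'e \<Rightarrow> real option" where
  "est_value E F k e =
     (if \<exists>i. executed E F i \<and> e \<in> F i
      then Some (2 ^ ((THE i. executed E F i \<and> e \<in> F i) - 1) * k) else None)"

end

theory Submission imports Defs begin
lemma edge_conn_mono:
  assumes "finite E" "E' \<subseteq> E"
  shows "edge_conn U E' ends \<le> edge_conn U E ends"
  unfolding edge_conn_def
proof (rule Inf_mono)
  fix b assume "b \<in> {ereal (real (card (cut_edges U E ends A))) | A. A \<noteq> {} \<and> A \<subset> U}"
  then obtain A where A: "A \<noteq> {}" "A \<subset> U" and b: "b = ereal (real (card (cut_edges U E ends A)))" by blast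
  have "cut_edges U E' ends A \<subseteq> cut_edges U E ends A" using assms(2) unfolding cut_edges_def by blast
  moreover have "finite (cut_edges U E ends A)" using assms(1) unfolding cut_edges_def by simp
  ultimately have c: "card (cut_edges U E' ends A) \<le> card (cut_edges U E ends A)" by (simp add: card_mono)
  then show "\<exists>a\<in>{ereal (real (card (cut_edges U E' ends A))) | A. A \<noteq> {} \<and> A \<subset> U}. a \<le> b"
    proof (intro bexI) show "ereal (real (card (cut_edges U E' ends A))) \<le> b" using b c by simp show "ereal (real (card (cut_edges U E' ends A))) \<in> {ereal (real (card (cut_edges U E' ends A))) | A. A \<noteq> {} \<and> A \<subset> U}" using A by blast qed
qed

lemma strength_mono:
  assumes "finite E" "E' \<subseteq> E"
  shows "strength V E' ends e \<le> strength V E ends e"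
  unfolding strength_def
proof (rule Sup_mono)
  fix a assume "a \<in> {edge_conn U (induced_edges E' ends U) ends | U. ends e \<subseteq> U \<and> U \<subseteq> V}"
  then obtain U where U: "ends e \<subseteq> U" "U \<subseteq> V" and a: "a = edge_conn U (induced_edges E' ends U) ends" by blast
  have sub: "induced_edges E' ends U \<subseteq> induced_edges E ends U" using assms(2) unfolding induced_edges_def by blast
  have fin: "finite (induced_edges E ends U)" using assms(1) unfolding induced_edges_def by simp
  have le: "a \<le> edge_conn U (induced_edges E ends U) ends"
    unfolding a by (rule edge_conn_mono[OF fin sub])
  show "\<exists>b\<in>{edge_conn U (induced_edges E ends U) ends | U. ends e \<subseteq> U \<and> U \<subseteq> V}. a \<le> b"
  proof (intro bexI)
    show "a \<le> edge_conn U (induced_edges E ends U) ends" by (rule le)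
    show "edge_conn U (induced_edges E ends U) ends \<in> {edge_conn U (induced_edges E ends U) ends | U. ends e \<subseteq> U \<and> U \<subseteq> V}" using U by blast
  qed
qed
theorem lemma3p1:
  fixes V :: "'a set" and E :: "'e set" and ends :: "'e \<Rightarrow> 'a set"
    and k :: real and F :: "nat \<Rightarrow> 'e set"
  assumes "finite V" and "finite E" and "\<forall>e\<in>E. ends e \<subseteq> V"
    and "k > 0" and "\<forall>e\<in>E. strength V E ends e \<ge> ereal k"
    and "estimation_run V E ends k F"
  shows "(\<forall>i e. executed E F i \<and> e \<in> F i \<longrightarrow> strength V E ends e \<ge> ereal (2 ^ (i - 1) * k))
       \<and> (\<forall>e g. e \<in> E \<and> est_value E F k e = Some g \<longrightarrow> ereal g \<le> strength V E ends e)"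
proof -
  have run: "\<And>i. i \<ge> 1 \<Longrightarrow> remaining E F (i - 1) \<noteq> {} \<Longrightarrow>
        F i \<subseteq> remaining E F (i - 1) \<and>
        {e \<in> remaining E F (i - 1). weak V (remaining E F (i - 1)) ends (2 ^ i * k) e} \<subseteq> F i"
    using assms(6) unfolding estimation_run_def by blast
  have P1: "strength V E ends e \<ge> ereal (2 ^ (i - 1) * k)" if ex: "executed E F i" and eF: "e \<in> F i" for i e
  proof (cases "i = 1")
    case True
    with ex eF run[of 1] have "e \<in> E" unfolding executed_def remaining_def by auto
    with assms(5) True show ?thesis by simp
  next
    case False
    with ex have i2: "i \<ge> 2" unfolding executed_def by auto
    from ex run[of i] eF have eR: "e \<in> remaining E F (i - 1)" unfolding executed_def by auto
    define j where "j = i - 1"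
    have ij: "i = Suc j" "j \<ge> 1" using i2 j_def by auto
    have eRj: "e \<in> remaining E F (j - 1)" and enF: "e \<notin> F j"
      using eR ij unfolding remaining_def by auto
    have ne: "remaining E F (j - 1) \<noteq> {}" using eRj by auto
    from run[OF ij(2) ne] eRj enF have "\<not> weak V (remaining E F (j - 1)) ends (2 ^ j * k) e" by blast
    hence "strength V (remaining E F (j - 1)) ends e \<ge> ereal (2 ^ j * k)"
      unfolding weak_def by simp
    also have "strength V (remaining E F (j - 1)) ends e \<le> strength V E ends e"
      by (rule strength_mono) (use assms(2) in \<open>auto simp: remaining_def\<close>)
    finally show ?thesis using ij by simp
  qed
  have uniq: "i = i'" if "executed E F i" "e \<in> F i" "executed E F i'" "e \<in> F i'" for i i' e
  proof (rule ccontr)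
    assume "i \<noteq> i'"
    then consider "i < i'" | "i' < i" by linarith
    then show False
    proof cases
      case 1
      with that run[of i'] have "e \<in> remaining E F (i' - 1)" unfolding executed_def by auto
      moreover have "i \<in> {1..i'-1}" using 1 that unfolding executed_def by auto
      ultimately show False using that unfolding remaining_def by auto
    next
      case 2
      with that run[of i] have "e \<in> remaining E F (i - 1)" unfolding executed_def by auto
      moreover have "i' \<in> {1..i-1}" using 2 that unfolding executed_def by auto
      ultimately show False using that unfolding remaining_def by auto
    qed
  qed
  have P2: "ereal g \<le> strength V E ends e" if "est_value E F k e = Some g" for e g
  proof -
    from that obtain i where i: "executed E F i" "e \<in> F i"
      unfolding est_value_def by (auto split: if_splits)
    have "(THE i. executed E F i \<and> e \<in> F i) = i"
      using i uniq by blast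
    with that i have "g = 2 ^ (i - 1) * k" unfolding est_value_def by (auto split: if_splits)
    with P1[OF i] show ?thesis by simp
  qed
  show ?thesis using P1 P2 by blast
qed

end
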